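(* Let $u\in[-\infty,\infty)$, $v\in(u,\infty]$, $L,\mathfrak L,d,\mathfrak d\in\mathbb N$, $\theta\in\mathbb R^d$, $l_0,\dots,l_L,\mathfrak l_0,\dots,\mathfrak l_{\mathfrak L}\in\mathbb N$ satisfy $d\ge\sum_{i=1}^Ll_i(l_{i-1}+1)$, $\mathfrak d\ge\sum_{i=1}^{\mathfrak L}\mathfrak l_i(\mathfrak l_{i-1}+1)$, $\mathfrak L\ge L$, $\mathfrak l_0=l_0$, $\mathfrak l_{\mathfrak L}=l_L$, $\mathfrak l_i\ge l_i$ for all $i\in\mathbb N\cap[0,L)$, and $\mathfrak l_i\ge 2l_L$ for all $i\in\mathbb N\cap(L-1,\mathfrak L)$. Then there exists $\vartheta\in\mathbb R^{\mathfrak d}$ such that $\|\vartheta\|_\infty\le\max\{1,\|\theta\|_\infty\}$ and $\mathscr N^{\vartheta,(\mathfrak l_0,\dots,\mathfrak l_{\mathfrak L})}_{u,v}=\mathscr N^{\theta,(l_0,\dots,l_L)}_{u,v}$.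
   Context: $\mathbb N=\{1,2,\dots\}$; $\|\cdot\|_\infty$ is the maximum norm. For $r,s\in\mathbb N$, $k\in\mathbb N_0$, $\theta\in\mathbb R^{n}$ with $n\ge k+rs+r$, $\mathcal A^{\theta,k}_{r,s}\colon\mathbb R^s\to\mathbb R^r$ has $i$-th component $x\mapsto\sum_{j=1}^s\theta_{k+(i-1)s+j}x_j+\theta_{k+rs+i}$. $\mathfrak C_{u,v,n}$ applies $y\mapsto\max\{u,\min\{y,v\}\}$ componentwise on $\mathbb R^n$ and $\mathfrak R_n$ applies $y\mapsto\max\{y,0\}$ componentwise. For $l=(l_0,\dots,l_L)$, $\theta\in\mathbb R^n$ with $n\ge\sum_kl_k(l_{k-1}+1)$ and $s_k=\sum_{j=1}^kl_j(l_{j-1}+1)$, $\mathscr N^{\theta,l}_{u,v}=\mathfrak C_{u,v,l_L}\circ\mathcal A^{\theta,s_{L-1}}_{l_L,l_{L-1}}\circ\mathfrak R_{l_{L-1}}\circ\cdots\circ\mathfrak R_{l_1}\circ\mathcal A^{\theta,0}_{l_1,l_0}\colon\mathbb R^{l_0}\to\mathbb R^{l_L}$ (for $L=1$ just $\mathfrak C_{u,v,l_1}\circ\mathcal A^{\theta,0}_{l_1,l_0}$). *)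

theory Defs
  imports "HOL-Analysis.Analysis"
begin

text \<open>Parameter vectors in R^d are functions nat => real, used on indices 1..d
  (1-based, as in the paper). Inputs/outputs of networks are real lists.\<close>

definition maxnorm :: "nat \<Rightarrow> (nat \<Rightarrow> real) \<Rightarrow> real" where
  "maxnorm d \<theta> = Max ((\<lambda>i. \<bar>\<theta> i\<bar>) ` {1..d})"

definition affine :: "(nat \<Rightarrow> real) \<Rightarrow> nat \<Rightarrow> nat \<Rightarrow> nat \<Rightarrow> real list \<Rightarrow> real list" where
  "affine \<theta> k r s x =
     map (\<lambda>i. (\<Sum>j=1..s. \<theta> (k + (i - 1) * s + j) * x ! (j - 1)) + \<theta> (k + r * s + i)) [1..<r+1]"

definition relu :: "real list \<Rightarrow> real list" where
  "relu x = map (\<lambda>y. max y 0) x"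

definition clip :: "ereal \<Rightarrow> ereal \<Rightarrow> real list \<Rightarrow> real list" where
  "clip u v x = map (\<lambda>y. real_of_ereal (max u (min (ereal y) v))) x"

definition offs :: "nat list \<Rightarrow> nat \<Rightarrow> nat" where
  "offs l k = (\<Sum>j=1..k. l ! j * (l ! (j - 1) + 1))"

primrec hidden :: "(nat \<Rightarrow> real) \<Rightarrow> nat list \<Rightarrow> nat \<Rightarrow> real list \<Rightarrow> real list" where
  "hidden \<theta> l 0 x = x"
| "hidden \<theta> l (Suc k) x = relu (affine \<theta> (offs l k) (l ! Suc k) (l ! k) (hidden \<theta> l k x))"

definition realization :: "ereal \<Rightarrow> ereal \<Rightarrow> (nat \<Rightarrow> real) \<Rightarrow> nat list \<Rightarrow> real list \<Rightarrow> real list" where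
  "realization u v \<theta> l x =
     (let L = length l - 1 in
      clip u v (affine \<theta> (offs l (L - 1)) (l ! L) (l ! (L - 1)) (hidden \<theta> l (L - 1) x)))"

end

theory Submission imports Defs begin

definition dec :: "nat list \<Rightarrow> (nat\<Rightarrow>nat\<Rightarrow>nat\<Rightarrow>real) \<Rightarrow> (nat\<Rightarrow>nat\<Rightarrow>real) \<Rightarrow> nat \<Rightarrow> real" where
 "dec ll W B n = (let kk = (LEAST k. n \<le> offs ll k); ss = ll!(kk-1); rr = ll!kk; mm = n - offs ll (kk-1) - 1 in
    (if mm < rr * ss then W kk (mm div ss + 1) (mm mod ss + 1) else B kk (mm - rr * ss + 1)))"

lemma offs_Suc: "offs l (Suc k) = offs l k + l!(Suc k) * (l!k + 1)"
  unfolding offs_def by simp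

lemma offs_mono: "k' \<le> k \<Longrightarrow> offs l k' \<le> offs l k"
  unfolding offs_def by (intro sum_mono2) auto

lemma dm: "q < (s::nat) \<Longrightarrow> (p * s + q) div s = p \<and> (p * s + q) mod s = q"
  by simp

lemma dec_W:
  assumes "p < ll!Suc k" "1 \<le> j" "j \<le> ll!k"
  shows "dec ll W B (offs ll k + p*ll!k + j) = W (Suc k) (p+1) j"
proof -
  let ?s = "ll!k" and ?r = "ll!Suc k"
  let ?n = "offs ll k + p*ll!k + j"
  have a: "p * ?s + j \<le> ?r * ?s"
  proof -
    have "p * ?s + j \<le> (p+1) * ?s" using assms by simp
    also have "\<dots> \<le> ?r * ?s" using assms by (intro mult_le_mono1) simp
    finally show ?thesis .
  qed
  have L: "(LEAST k'. ?n \<le> offs ll k') = Suc k"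
  proof (rule Least_equality)
    show "?n \<le> offs ll (Suc k)" using a by (simp add: offs_Suc algebra_simps)
    fix y assume "?n \<le> offs ll y"
    then show "Suc k \<le> y" using offs_mono[of y k ll] assms by (cases "Suc k \<le> y") auto
  qed
  have m: "?n - offs ll k - 1 = p * ?s + (j-1)" using assms by simp
  have "p * ?s + (j-1) < ?r * ?s" using a assms by simp
  moreover have "(p * ?s + (j-1)) div ?s = p" "(p * ?s + (j-1)) mod ?s = j - 1"
    using dm[of "j-1" ?s p] assms by auto
  ultimately show ?thesis unfolding dec_def Let_def L m using assms by simp
qed

lemma dec_B:
  assumes "p < ll!Suc k"
  shows "dec ll W B (offs ll k + ll!Suc k * ll!k + (p+1)) = B (Suc k) (p+1)"
proof -
  let ?s = "ll!k" and ?r = "ll!Suc k"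
  let ?n = "offs ll k + ll!Suc k * ll!k + (p+1)"
  have L: "(LEAST k'. ?n \<le> offs ll k') = Suc k"
  proof (rule Least_equality)
    show "?n \<le> offs ll (Suc k)" using assms by (simp add: offs_Suc algebra_simps)
    fix y assume "?n \<le> offs ll y"
    then show "Suc k \<le> y" using offs_mono[of y k ll] assms by (cases "Suc k \<le> y") auto
  qed
  have m: "?n - offs ll k - 1 = ?r * ?s + p" by simp
  show ?thesis unfolding dec_def Let_def L m by simp
qed

lemma affine_len[simp]: "length (affine \<theta> k r s x) = r"
  unfolding affine_def by simp

lemma affine_nth: "p < r \<Longrightarrow> affine \<theta> k r s x ! p = (\<Sum>j=1..s. \<theta> (k + p * s + j) * x!(j-1)) + \<theta>(k + r * s + (p+1))"
proof -
  assume "p < r"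
  then show ?thesis unfolding affine_def
    by (subst nth_map) (simp_all del: upt_Suc add: nth_upt add.commute)
qed

lemma affine_dec_nth:
  assumes "p < ll!Suc k"
  shows "affine (dec ll W B) (offs ll k) (ll!Suc k) (ll!k) x ! p
    = (\<Sum>j=1..ll!k. W (Suc k) (p+1) j * x!(j-1)) + B (Suc k) (p+1)"
proof -
  have "affine (dec ll W B) (offs ll k) (ll!Suc k) (ll!k) x ! p
    = (\<Sum>j=1..ll!k. dec ll W B (offs ll k + p * ll!k + j) * x!(j-1)) + dec ll W B (offs ll k + ll!Suc k * ll!k + (p+1))"
    using assms by (rule affine_nth)
  also have "\<dots> = (\<Sum>j=1..ll!k. W (Suc k) (p+1) j * x!(j-1)) + B (Suc k) (p+1)"
  proof (intro arg_cong2[where f="(+)"] sum.cong refl)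
    fix j assume "j \<in> {1..ll!k}"
    then show "dec ll W B (offs ll k + p * ll!k + j) * x!(j-1) = W (Suc k) (p+1) j * x!(j-1)"
      using dec_W[of p ll k j W B] assms by simp
  qed (rule dec_B[OF assms])
  finally show ?thesis .
qed

lemma relu_len[simp]: "length (relu x) = length x" unfolding relu_def by simp
lemma relu_nth[simp]: "p < length x \<Longrightarrow> relu x ! p = max (x!p) 0" unfolding relu_def by simp

lemma hidden_len: "length x = l!0 \<Longrightarrow> length (hidden \<theta> l k x) = l!k"
  by (induction k) auto

lemma sum_pad:
  assumes "s \<le> s'" "\<And>j. s < j \<Longrightarrow> w j = (0::real)" "length h = s"
  shows "(\<Sum>j=1..s'. w j * (h @ zs)!(j-1)) = (\<Sum>j=1..s. w j * h!(j-1))"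
proof -
  have "(\<Sum>j=1..s'. w j * (h @ zs)!(j-1)) = (\<Sum>j=1..s. w j * (h @ zs)!(j-1))"
    using assms by (intro sum.mono_neutral_right) auto
  also have "\<dots> = (\<Sum>j=1..s. w j * h!(j-1))"
    using assms by (intro sum.cong) (auto simp: nth_append)
  finally show ?thesis .
qed

lemma sum_id:
  assumes "1 \<le> q" "q \<le> (s::nat)"
  shows "(\<Sum>j=1..s. (if q = j \<and> c then 1 else 0) * (f j::real)) = (if c then f q else 0)"
  using assms by (simp add: if_distrib[of "\<lambda>x. x * _"] sum.delta' cong: if_cong)

lemma sum_diff:
  assumes "1 \<le> q" "q + a \<le> s" "1 \<le> (a::nat)"
  shows "(\<Sum>j=1..s. (if j = q then 1 else if j = q + a then -1 else 0) * (f j::real)) = f q - f (q+a)"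
proof -
  have "(\<Sum>j=1..s. (if j = q then 1 else if j = q + a then -1 else 0) * (f j::real))
     = (\<Sum>j=1..s. (if j = q then f j else 0) + (if j = q + a then - f j else 0))"
    using assms by (intro sum.cong) auto
  also have "\<dots> = f q - f (q+a)" using assms by (simp add: sum.distrib)
  finally show ?thesis .
qed


theorem lemma2p30:
  fixes u v :: ereal and L LL d dd :: nat and \<theta> :: "nat \<Rightarrow> real" and l ll :: "nat list"
  assumes "u \<noteq> \<infinity>" and "u < v"
    and "L \<ge> 1" and "LL \<ge> 1" and "d \<ge> 1" and "dd \<ge> 1"
    and "length l = L + 1" and "length ll = LL + 1"
    and "\<forall>i\<le>L. l ! i \<ge> 1" and "\<forall>i\<le>LL. ll ! i \<ge> 1"
    and "d \<ge> offs l L" and "dd \<ge> offs ll LL"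
    and "LL \<ge> L" and "ll ! 0 = l ! 0" and "ll ! LL = l ! L"
    and "\<forall>i. 1 \<le> i \<and> i < L \<longrightarrow> ll ! i \<ge> l ! i"
    and "\<forall>i. 1 \<le> i \<and> L - 1 < i \<and> i < LL \<longrightarrow> ll ! i \<ge> 2 * l ! L"
  shows "\<exists>\<phi> :: nat \<Rightarrow> real. maxnorm dd \<phi> \<le> max 1 (maxnorm d \<theta>) \<and>
           (\<forall>x. length x = l ! 0 \<longrightarrow> realization u v \<phi> ll x = realization u v \<theta> l x)"
proof -
  note A = assms
  obtain L' where L': "L = Suc L'" using \<open>L \<ge> 1\<close> by (cases L) auto
  define a where "a = l!L"
  have a1: "1 \<le> a" using A(9) by (simp add: a_def)
  define Wt where "Wt k i j = \<theta> (offs l (k-1) + (i-1) * l!(k-1) + j)" for k i j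
  define Bt where "Bt k i = \<theta> (offs l (k-1) + l!k * l!(k-1) + i)" for k i
  define W where "W k i j = (if 1 \<le> k \<and> k \<le> L then
      (if 1 \<le> j \<and> j \<le> l!(k-1) then
         (if 1 \<le> i \<and> i \<le> l!k then Wt k i j else if k = L \<and> a < i \<and> i \<le> 2*a then - Wt k (i-a) j else 0)
       else 0)
    else if k < LL then (if i = j \<and> i \<le> 2*a then 1 else 0)
    else (if j = i then 1 else if j = i + a then -1 else 0))" for k i j
  define B where "B k i = (if 1 \<le> k \<and> k \<le> L then
      (if 1 \<le> i \<and> i \<le> l!k then Bt k i else if k = L \<and> a < i \<and> i \<le> 2*a then - Bt k (i-a) else 0)
    else 0)" for k i
  define \<phi> where "\<phi> = dec ll W B"
  define M where "M = max 1 (maxnorm d \<theta>)"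
  have M1: "1 \<le> M" unfolding M_def by simp
  have th: "\<bar>\<theta> n\<bar> \<le> M" if "1 \<le> n" "n \<le> d" for n
    unfolding M_def maxnorm_def using that by (intro max.coboundedI2 Max_ge) auto
  have offsk: "offs l k = offs l (k-1) + l!k * (l!(k-1)+1)" if "1 \<le> k" for k
    using offs_Suc[of l "k-1"] that by simp
  have offsL: "offs l k \<le> d" if "k \<le> L" for k
    using offs_mono[OF that, of l] A(11) by linarith
  have Wt_b: "\<bar>Wt k i j\<bar> \<le> M" if "1 \<le> k" "k \<le> L" "1 \<le> i" "i \<le> l!k" "1 \<le> j" "j \<le> l!(k-1)" for k i j
  proof -
    have "(i-1) * l!(k-1) + j \<le> (i-1) * l!(k-1) + l!(k-1)" using that by simp
    also have "\<dots> = i * l!(k-1)" using that by (cases i) auto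
    also have "\<dots> \<le> l!k * l!(k-1)" using that by (intro mult_le_mono1) auto
    finally have "(i-1) * l!(k-1) + j \<le> l!k * l!(k-1)" .
    then have "offs l (k-1) + (i-1) * l!(k-1) + j \<le> d"
      using offsk[OF that(1)] offsL[OF that(2)] by (simp add: algebra_simps)
    then show ?thesis unfolding Wt_def using that by (intro th) auto
  qed
  have Bt_b: "\<bar>Bt k i\<bar> \<le> M" if "1 \<le> k" "k \<le> L" "1 \<le> i" "i \<le> l!k" for k i
  proof -
    have "offs l (k-1) + l!k * l!(k-1) + i \<le> d"
      using offsk[OF that(1)] offsL[OF that(2)] that by (simp add: algebra_simps)
    then show ?thesis unfolding Bt_def using that by (intro th) auto
  qed
  have W_b: "\<bar>W k i j\<bar> \<le> M" for k i j
    unfolding W_def using Wt_b[of k i j] Wt_b[of k "i-a" j] M1 by (auto simp: a_def)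
  have B_b: "\<bar>B k i\<bar> \<le> M" for k i
    unfolding B_def using Bt_b[of k i] Bt_b[of k "i-a"] M1 by (auto simp: a_def)
  have \<phi>b: "\<bar>\<phi> n\<bar> \<le> M" for n
    unfolding \<phi>_def dec_def Let_def using W_b B_b by auto
  have norm: "maxnorm dd \<phi> \<le> M"
    unfolding maxnorm_def using \<open>dd \<ge> 1\<close> \<phi>b by (intro Max.boundedI) auto
  have affW: "affine \<phi> (offs ll k) (ll!Suc k) (ll!k) z ! p
      = (\<Sum>j=1..ll!k. W (Suc k) (p+1) j * z!(j-1)) + B (Suc k) (p+1)" if "p < ll!Suc k" for k z p
    unfolding \<phi>_def using that by (rule affine_dec_nth)
  have affT: "affine \<theta> (offs l k) (l!Suc k) (l!k) z ! p
      = (\<Sum>j=1..l!k. Wt (Suc k) (p+1) j * z!(j-1)) + Bt (Suc k) (p+1)" if "p < l!Suc k" for k z p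
    using that by (simp add: affine_nth Wt_def Bt_def)
  have lt: "l!k \<le> ll!k" if "k < L" for k
    using that A(14) A(16) by (cases k) auto
  have corr: "realization u v \<phi> ll x = realization u v \<theta> l x" if x: "length x = l!0" for x
  proof -
    define h where "h k = hidden \<theta> l k x" for k
    have hl: "length (h k) = l!k" for k unfolding h_def using hidden_len[OF x] .
    have hS: "h (Suc k) = relu (affine \<theta> (offs l k) (l!Suc k) (l!k) (h k))" for k
      by (simp add: h_def)
    have cA: "hidden \<phi> ll k x = h k @ replicate (ll!k - l!k) 0" if "k < L" for k
      using that
    proof (induction k)
      case 0 then show ?case by (simp add: h_def A(14))
    next
      case (Suc k)
      then have IH: "hidden \<phi> ll k x = h k @ replicate (ll!k - l!k) 0" by simp
      have ltk: "l!k \<le> ll!k" using Suc lt by simp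
      have ltS: "l!Suc k \<le> ll!Suc k" using Suc lt by simp
      show ?case
      proof (rule nth_equalityI)
        show "length (hidden \<phi> ll (Suc k) x) = length (h (Suc k) @ replicate (ll ! Suc k - l ! Suc k) 0)"
          using hl ltS by simp
        fix p assume "p < length (hidden \<phi> ll (Suc k) x)"
        then have p: "p < ll!Suc k" by simp
        have "hidden \<phi> ll (Suc k) x ! p
            = max ((\<Sum>j=1..ll!k. W (Suc k) (p+1) j * (h k @ replicate (ll!k - l!k) 0)!(j-1)) + B (Suc k) (p+1)) 0"
          using p IH affW[OF p] by simp
        also have "\<dots> = max ((\<Sum>j=1..l!k. W (Suc k) (p+1) j * h k!(j-1)) + B (Suc k) (p+1)) 0"
          using ltk hl Suc.prems by (subst sum_pad) (auto simp: W_def)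
        also have "\<dots> = (h (Suc k) @ replicate (ll ! Suc k - l ! Suc k) 0) ! p"
        proof (cases "p < l!Suc k")
          case True
          have "(\<Sum>j=1..l!k. W (Suc k) (p+1) j * h k!(j-1)) = (\<Sum>j=1..l!k. Wt (Suc k) (p+1) j * h k!(j-1))"
            using True Suc.prems by (intro sum.cong refl) (auto simp: W_def)
          moreover have "B (Suc k) (p+1) = Bt (Suc k) (p+1)" using True Suc.prems by (simp add: B_def)
          ultimately show ?thesis using True hl by (simp add: nth_append hS affT)
        next
          case False
          have "(\<Sum>j=1..l!k. W (Suc k) (p+1) j * h k!(j-1)) = 0"
            using False Suc.prems by (intro sum.neutral) (auto simp: W_def)
          moreover have "B (Suc k) (p+1) = 0" using False Suc.prems by (simp add: B_def)
          ultimately show ?thesis using False hl p by (simp add: nth_append)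
        qed
        finally show "hidden \<phi> ll (Suc k) x ! p = (h (Suc k) @ replicate (ll ! Suc k - l ! Suc k) 0) ! p" .
      qed
    qed
    define y where "y = affine \<theta> (offs l L') (l!Suc L') (l!L') (h L')"
    have yl: "length y = a" by (simp add: y_def a_def L')
    have yn: "y!p = (\<Sum>j=1..l!L'. Wt L (p+1) j * h L'!(j-1)) + Bt L (p+1)" if "p < a" for p
      using that unfolding y_def a_def L' by (rule affT)
    have rT: "realization u v \<theta> l x = clip u v y"
      unfolding realization_def y_def h_def using A(7) L' by simp
    define g where "g = affine \<phi> (offs ll L') (ll!Suc L') (ll!L') (hidden \<phi> ll L' x)"
    have gl: "length g = ll!L" by (simp add: g_def L')
    have gp: "g!p = (if p < a then y!p else if p < 2*a then -(y!(p-a)) else 0)" if p: "p < ll!L" for p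
    proof -
      have ltk: "l!L' \<le> ll!L'" using lt L' by simp
      have "g!p = (\<Sum>j=1..ll!L'. W L (p+1) j * (h L' @ replicate (ll!L' - l!L') 0)!(j-1)) + B L (p+1)"
        unfolding g_def using p cA[of L'] affW[of p L'] L' by simp
      also have "\<dots> = (\<Sum>j=1..l!L'. W L (p+1) j * h L'!(j-1)) + B L (p+1)"
        using ltk hl L' by (subst sum_pad) (auto simp: W_def)
      also have "\<dots> = (if p < a then y!p else if p < 2*a then -(y!(p-a)) else 0)"
      proof -
        consider "p < a" | "a \<le> p" "p < 2*a" | "2*a \<le> p" by linarith
        then show ?thesis
        proof cases
          case 1
          have "(\<Sum>j=1..l!L'. W L (p+1) j * h L'!(j-1)) = (\<Sum>j=1..l!L'. Wt L (p+1) j * h L'!(j-1))"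
            using 1 L' by (intro sum.cong refl) (auto simp: W_def a_def)
          moreover have "B L (p+1) = Bt L (p+1)" using 1 L' by (simp add: B_def a_def)
          ultimately show ?thesis using 1 yn by simp
        next
          case 2
          have e: "p + 1 - a = p - a + 1" using 2 by simp
          have "(\<Sum>j=1..l!L'. W L (p+1) j * h L'!(j-1)) = (\<Sum>j=1..l!L'. - (Wt L (p-a+1) j * h L'!(j-1)))"
            using 2 L' by (intro sum.cong refl) (auto simp: W_def a_def e Suc_diff_le)
          moreover have "B L (p+1) = - Bt L (p-a+1)" using 2 L' by (simp add: B_def a_def e Suc_diff_le)
          ultimately show ?thesis using 2 yn[of "p-a"] by (simp add: sum_negf)
        next
          case 3
          have "(\<Sum>j=1..l!L'. W L (p+1) j * h L'!(j-1)) = 0"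
            using 3 L' by (intro sum.neutral) (auto simp: W_def a_def)
          moreover have "B L (p+1) = 0" using 3 L' by (simp add: B_def a_def)
          ultimately show ?thesis using 3 by simp
        qed
      qed
      finally show ?thesis .
    qed
    show ?thesis
    proof (cases "LL = L")
      case True
      have "g = y"
      proof (rule nth_equalityI)
        show "length g = length y" using gl yl True A(15) a_def by simp
        fix p assume "p < length g"
        then show "g!p = y!p" using gp gl True A(15) a_def by simp
      qed
      moreover have "realization u v \<phi> ll x = clip u v g"
        unfolding realization_def g_def using A(8) True L' by simp
      ultimately show ?thesis using rT by simp
    next
      case False
      then obtain m where m: "LL = Suc (L + m)" using A(13) by (metis le_neq_implies_less less_iff_Suc_add add_Suc_right)
      define F where "F p = (if p < a then max (y!p) 0 else if p < 2*a then max (-(y!(p-a))) 0 else 0)" for p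
      have F0: "0 \<le> F p" for p unfolding F_def by auto
      have cC: "length (hidden \<phi> ll (L+n) x) = ll!(L+n) \<and> (\<forall>p<ll!(L+n). hidden \<phi> ll (L+n) x ! p = F p)"
        if "L + n < LL" for n
        using that
      proof (induction n)
        case 0
        have "hidden \<phi> ll L x = relu g" unfolding g_def L' by simp
        then show ?case using gl gp by (simp add: F_def)
      next
        case (Suc n)
        then have IH: "length (hidden \<phi> ll (L+n) x) = ll!(L+n)" "\<forall>p<ll!(L+n). hidden \<phi> ll (L+n) x ! p = F p"
          by auto
        have big: "2*a \<le> ll!(L+n)" using A(17) Suc.prems a_def A(3) by auto
        have "hidden \<phi> ll (L + Suc n) x ! p = F p" if p: "p < ll!(L + Suc n)" for p
        proof -
          have hh: "hidden \<phi> ll (L + Suc n) x ! p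
            = max ((\<Sum>j=1..ll!(L+n). W (Suc (L+n)) (p+1) j * hidden \<phi> ll (L+n) x!(j-1)) + B (Suc (L+n)) (p+1)) 0"
            using p affW[of p "L+n"] by simp
          have Wi: "W (Suc (L+n)) (p+1) j = (if p+1 = j \<and> p+1 \<le> 2*a then 1 else 0)" for j
            using Suc.prems by (simp add: W_def)
          have Bi: "B (Suc (L+n)) (p+1) = 0" by (simp add: B_def)
          show ?thesis
          proof (cases "p < 2*a")
            case True
            have "(\<Sum>j=1..ll!(L+n). W (Suc (L+n)) (p+1) j * hidden \<phi> ll (L+n) x!(j-1)) = hidden \<phi> ll (L+n) x ! p"
              unfolding Wi using True big by (subst sum_id) auto
            then show ?thesis using hh Bi IH True big F0[of p] by simp
          next
            case False
            have "(\<Sum>j=1..ll!(L+n). W (Suc (L+n)) (p+1) j * hidden \<phi> ll (L+n) x!(j-1)) = 0"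
              unfolding Wi using False by (intro sum.neutral) auto
            then show ?thesis using hh Bi False by (simp add: F_def)
          qed
        qed
        then show ?case by simp
      qed
      have z: "length (hidden \<phi> ll (L+m) x) = ll!(L+m)" "\<forall>p<ll!(L+m). hidden \<phi> ll (L+m) x ! p = F p"
        using cC[of m] m by auto
      have big: "2*a \<le> ll!(L+m)" using A(17) m a_def A(3) by auto
      have "affine \<phi> (offs ll (L+m)) (ll!LL) (ll!(L+m)) (hidden \<phi> ll (L+m) x) = y"
      proof (rule nth_equalityI)
        show "length (affine \<phi> (offs ll (L+m)) (ll!LL) (ll!(L+m)) (hidden \<phi> ll (L+m) x)) = length y"
          using yl A(15) a_def by simp
        fix p assume "p < length (affine \<phi> (offs ll (L+m)) (ll!LL) (ll!(L+m)) (hidden \<phi> ll (L+m) x))"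
        then have p: "p < a" using A(15) a_def by simp
        have Wi: "W LL (p+1) j = (if j = p+1 then 1 else if j = p+1 + a then -1 else 0)" for j
          using m by (simp add: W_def)
        have "affine \<phi> (offs ll (L+m)) (ll!LL) (ll!(L+m)) (hidden \<phi> ll (L+m) x) ! p
          = (\<Sum>j=1..ll!(L+m). W LL (p+1) j * hidden \<phi> ll (L+m) x!(j-1)) + B LL (p+1)"
          using affW[of p "L+m"] p m A(15) a_def by simp
        also have "\<dots> = hidden \<phi> ll (L+m) x ! p - hidden \<phi> ll (L+m) x ! (p + a)"
          unfolding Wi using p big a1 m by (subst sum_diff) (auto simp: B_def)
        also have "\<dots> = F p - F (p+a)" using z p big by simp
        also have "\<dots> = y!p" using p unfolding F_def by simp
        finally show "affine \<phi> (offs ll (L+m)) (ll!LL) (ll!(L+m)) (hidden \<phi> ll (L+m) x) ! p = y!p" .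
      qed
      moreover have "realization u v \<phi> ll x = clip u v (affine \<phi> (offs ll (L+m)) (ll!LL) (ll!(L+m)) (hidden \<phi> ll (L+m) x))"
        unfolding realization_def using A(8) m by simp
      ultimately show ?thesis using rT by simp
    qed
  qed
  show ?thesis using norm corr unfolding M_def by blast
qed

end
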